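(* Let $K^{(d)}$ be a sequence of positive semi-definite dot-product kernels on $\mathbb S^{d-1}$ (data uniform on $\mathbb S^{d-1}$), with distinct eigenvalues $\tilde\lambda_1>\tilde\lambda_2>\dots$ and multiplicities $N(d,1),N(d,2),\dots$, and suppose there is $b>0$ such that for all $d$ (with $m=m(d)$), $\max_{i\le k_m}\frac1{\tilde\lambda_i}<\frac{m-L_m}{b}$. Let the dimension grow with sample size as $d=\log_2 m$ (i.e. $m=2^d$), and let the noise variance be $\sigma^2>0$. Then the minimum-norm interpolant cannot exhibit benign overfitting for any such sequence: there is an absolute constant $\eta>0$ such that for all $d,m$, $\tilde R(\hat f_0)>(1+\eta)\sigma^2$.
   Context: Eigenframework: with Mercer eigenvalues $\lambda_1\ge\lambda_2\ge\dots>0$ (with multiplicity) and target $f^*=\sum_i\beta_i\phi_i$, let $\kappa_0>0$ solve $\sum_i\frac{\lambda_i}{\lambda_i+\kappa_0}=m$, $\mathcal L_i=\frac{\lambda_i}{\lambda_i+\kappa_0}$, $\mathcal E_0=\frac{m}{m-\sum_i\mathcal L_i^2}$; the predicted risk of the minimum-norm interpolant is $\tilde R(\hat f_0)=\mathcal E_0(\sum_i(1-\mathcal L_i)^2\beta_i^2+\sigma^2)$. Indices: $k_m=\max\{k: N(d,1)+\dots+N(d,k)<m\}$, $L_m=N(d,1)+\dots+N(d,k_m)$.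
   Formalization: The kernel trace, the sum over k of $N(d,k)\tilde\lambda_k$, is also at most 1 for every d, and the constant eta may depend on b instead of being absolute. The statement above fails without it. *)

theory Defs
  imports "HOL-Analysis.Analysis"
begin

text \<open>N(d,k): dimension of the space of degree-k spherical harmonics on S^(d-1)
  (k >= 1, d >= 2): N(d,k) = (2k+d-2)/k * binom(k+d-3, k-1).\<close>
definition Nmult :: "nat \<Rightarrow> nat \<Rightarrow> nat" where
  "Nmult d k = ((2 * k + d - 2) * ((k + d - 3) choose (k - 1))) div k"

definition kidx :: "nat \<Rightarrow> nat \<Rightarrow> nat" where
  "kidx d m = (GREATEST k. (\<Sum>j=1..k. Nmult d j) < m)"

definition Lidx :: "nat \<Rightarrow> nat \<Rightarrow> nat" where
  "Lidx d m = (\<Sum>j=1..kidx d m. Nmult d j)"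

text \<open>Distinct eigenvalues lam k (k >= 1), eigenvalue lam k has multiplicity N(d,k).
  Learnability of an eigenvalue at ridge kappa.\<close>
definition Lcoef :: "(nat \<Rightarrow> real) \<Rightarrow> real \<Rightarrow> nat \<Rightarrow> real" where
  "Lcoef lam \<kappa> k = lam k / (lam k + \<kappa>)"

definition sumL :: "nat \<Rightarrow> (nat \<Rightarrow> real) \<Rightarrow> real \<Rightarrow> real" where
  "sumL d lam \<kappa> = (\<Sum>k. real (Nmult d (Suc k)) * Lcoef lam \<kappa> (Suc k))"

definition sumL2 :: "nat \<Rightarrow> (nat \<Rightarrow> real) \<Rightarrow> real \<Rightarrow> real" where
  "sumL2 d lam \<kappa> = (\<Sum>k. real (Nmult d (Suc k)) * (Lcoef lam \<kappa> (Suc k))\<^sup>2)"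

definition E0 :: "nat \<Rightarrow> real \<Rightarrow> (nat \<Rightarrow> real) \<Rightarrow> real \<Rightarrow> real" where
  "E0 d m lam \<kappa> = m / (m - sumL2 d lam \<kappa>)"

text \<open>Target coefficients: beta k j, j < N(d,k), are the coefficients of f* on the
  orthonormal eigenfunctions of the eigenspace of lam k.  Predicted risk of the
  minimum-norm interpolant.\<close>
definition pred_risk ::
  "nat \<Rightarrow> real \<Rightarrow> (nat \<Rightarrow> real) \<Rightarrow> (nat \<Rightarrow> nat \<Rightarrow> real) \<Rightarrow> real \<Rightarrow> real \<Rightarrow> real" where
  "pred_risk d m lam beta \<sigma>2 \<kappa> =
     E0 d m lam \<kappa> *
       ((\<Sum>k. (1 - Lcoef lam \<kappa> (Suc k))\<^sup>2 * (\<Sum>j<Nmult d (Suc k). (beta (Suc k) j)\<^sup>2)) + \<sigma>2)"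

end

theory Submission
  imports Defs
begin

lemma Nm: "Nmult (e+2) (Suc k) = (Suc k + e choose Suc k) + (k + e choose k)"
proof -
  have ab: "Suc k * (Suc k + e choose Suc k) = Suc (k+e) * (k + e choose k)"
    using binomial_absorption[of k "Suc k + e"] by simp
  have "(2 * Suc k + e) * (k + e choose k) = Suc k * ((Suc k + e choose Suc k) + (k + e choose k))"
    using ab by (simp add: algebra_simps)
  moreover have "Nmult (e+2) (Suc k) = ((2 * Suc k + e) * (k + e choose k)) div Suc k"
    unfolding Nmult_def by (simp add: numeral_eq_Suc)
  ultimately have "Nmult (e+2) (Suc k) = (Suc k * ((Suc k + e choose Suc k) + (k + e choose k))) div Suc k"
    by metis
  then show ?thesis by (metis nonzero_mult_div_cancel_left nat.distinct(1))
qed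

lemma step2: "j \<le> D + 1 \<Longrightarrow> (D + 1 + j choose j) \<le> 2 * (D + j choose j)"
proof -
  assume h: "j \<le> D + 1"
  have "(D + 1) * (D + 1 + j choose j) = (D + 1 + j) * (D + j choose j)"
    using binomial_absorb_comp[of "D+1+j" j] by simp
  also have "\<dots> \<le> (2 * (D+1)) * (D + j choose j)" using h by (intro mult_right_mono) auto
  also have "\<dots> = (D+1) * (2 * (D + j choose j))" by simp
  finally have "(D + 1) * (D + 1 + j choose j) \<le> (D+1) * (2 * (D + j choose j))" .
  thus ?thesis using mult_le_cancel1[of "D+1"] by (metis add_gr_0 zero_less_one)
qed

lemma step98: "8 * j \<le> D + 1 \<Longrightarrow> 8 * (D + 1 + j choose j) \<le> 9 * (D + j choose j)"
proof -
  assume h: "8 * j \<le> D + 1"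
  have "(D + 1) * (D + 1 + j choose j) = (D + 1 + j) * (D + j choose j)"
    using binomial_absorb_comp[of "D+1+j" j] by simp
  hence "(D + 1) * (8 * (D + 1 + j choose j)) = (8 * (D + 1 + j)) * (D + j choose j)"
    by (metis mult.assoc mult.left_commute)
  also have "\<dots> \<le> (9 * (D+1)) * (D + j choose j)" using h by (intro mult_right_mono) auto
  finally have "(D + 1) * (8 * (D + 1 + j choose j)) \<le> (D+1) * (9 * (D + j choose j))"
    by (simp add: algebra_simps)
  thus ?thesis using mult_le_cancel1[of "D+1"] by (metis add_gr_0 zero_less_one)
qed

lemma iter98: "8^t * (9*j + t choose j) \<le> 9^t * (9*j choose j)"
proof (induction t)
  case 0 then show ?case by simp
next
  case (Suc t)
  have "8 * (8*j + t + 1 + j choose j) \<le> 9 * (8*j + t + j choose j)"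
    by (rule step98) simp
  hence "8 * (9*j + Suc t choose j) \<le> 9 * (9*j + t choose j)" by (simp add: algebra_simps)
  hence "8^t * (8 * (9*j + Suc t choose j)) \<le> 8^t * (9 * (9*j + t choose j))" by simp
  also have "\<dots> \<le> 9 * (9^t * (9*j choose j))" using Suc.IH by simp
  finally show ?case by (simp add: algebra_simps)
qed

lemma base9: "(9*j choose j) \<le> 2^(8*j)"
proof (induction j)
  case 0 then show ?case by simp
next
  case (Suc j)
  have ab: "Suc j * (9*j + 9 choose Suc j) = (9*j+9) * (9*j + 8 choose j)"
  proof -
    have "9*j+9-1 = 9*j+8" by simp
    thus ?thesis using binomial_absorption[of j "9*j+9"] by metis
  qed
  hence e: "(9*j + 9 choose Suc j) = 9 * (9*j + 8 choose j)"
  proof -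
    have "Suc j * (9*j + 9 choose Suc j) = Suc j * (9 * (9*j + 8 choose j))"
      using ab by (metis mult.assoc mult.commute numeral_eq_Suc mult_Suc_right add_Suc_right
          add.commute mult_Suc_right)
    thus ?thesis by (metis mult_cancel1 nat.distinct(1))
  qed
  have "8^8 * (9*j + 9 choose Suc j) = 9 * (8^8 * (9*j + 8 choose j))" using e by simp
  also have "\<dots> \<le> 9 * (9^8 * (9*j choose j))" using iter98[of 8 j] by simp
  also have "\<dots> \<le> 9 * (9^8 * 2^(8*j))" using Suc.IH by simp
  also have "\<dots> \<le> 8^8 * 2^(8 * Suc j)" by (simp add: power_add)
  finally have "(9*j + 9 choose Suc j) \<le> 2^(8 * Suc j)" by simp
  moreover have "9 * Suc j = 9*j+9" by simp
  ultimately show ?case by metis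
qed

lemma binbound: "8 * j \<le> D \<Longrightarrow> (D + j choose j) \<le> 2^D"
proof -
  assume "8*j \<le> D"
  then obtain t where D: "D = 8*j + t" using le_Suc_ex by blast
  have "(8*j + t + j choose j) \<le> 2^t * (9*j choose j)"
  proof (induction t)
    case 0 then show ?case by (simp add: algebra_simps)
  next
    case (Suc t)
    have "(8*j + t + 1 + j choose j) \<le> 2 * (8*j + t + j choose j)" by (rule step2) simp
    then show ?case using Suc.IH by simp
  qed
  also have "\<dots> \<le> 2^t * 2^(8*j)" using base9 by simp
  finally show ?thesis using D by (simp add: power_add mult.commute)
qed

lemma S_upper:
  assumes "8*j \<le> e+1"
  shows "(\<Sum>k=1..j. Nmult (e+2) k) < 2^(e+2)"
proof -
  define f where "f k = (e + k choose k)" for k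
  have S: "(\<Sum>k=1..j. Nmult (e+2) k) = (\<Sum>k<j. f (Suc k)) + (\<Sum>k<j. f k)"
  proof -
    have "Nmult (e+2) (Suc k) = f (Suc k) + f k" for k
      using Nm[of e k] by (simp add: f_def add.commute)
    note h = this
    have "(\<Sum>k=1..j. Nmult (e+2) k) = (\<Sum>k<j. Nmult (e+2) (Suc k))"
      unfolding One_nat_def by (rule sum.atLeast1_atMost_eq)
    also have "\<dots> = (\<Sum>k<j. f (Suc k) + f k)" by (rule sum.cong) (rule refl, rule h)
    finally show ?thesis by (simp only: sum.distrib)
  qed
  have A: "(\<Sum>k<Suc j. f k) = (Suc (e+j) choose j)"
    using sum_choose_lower[of e j] by (simp add: f_def lessThan_Suc_atMost)
  have s1: "(\<Sum>k<Suc j. f k) = f 0 + (\<Sum>k<j. f (Suc k))" by (rule sum.lessThan_Suc_shift)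
  have s2: "(\<Sum>k<Suc j. f k) = (\<Sum>k<j. f k) + f j" by simp
  have f0: "f 0 = 1" by (simp add: f_def)
  have fj: "f j \<ge> 1" by (simp add: f_def Suc_leI)
  have "(Suc (e+j) choose j) \<le> 2^(e+1)"
    using binbound[of j "e+1"] assms by simp
  hence "(\<Sum>k=1..j. Nmult (e+2) k) < 2 * 2^(e+1)" using S A s1 s2 f0 fj by linarith
  thus ?thesis by simp
qed

lemma ratio:
  assumes "e + 2 \<le> 8*(i+2)"
  shows "Nmult (e+2) (Suc (Suc i)) \<le> 10 * Nmult (e+2) (Suc i)"
proof -
  define a2 where "a2 = (Suc (Suc i) + e choose Suc (Suc i))"
  define a1 where "a1 = (Suc i + e choose Suc i)"
  have ab: "Suc (Suc i) * a2 = (Suc (Suc i) + e) * a1"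
    unfolding a1_def a2_def using binomial_absorption[of "Suc i" "Suc (Suc i) + e"] by simp
  also have "\<dots> \<le> (Suc (Suc i) * 9) * a1" using assms by (intro mult_right_mono) auto
  finally have "a2 \<le> 9 * a1"
    by (metis mult.assoc mult_le_cancel1 zero_less_Suc)
  moreover have "Nmult (e+2) (Suc (Suc i)) = a2 + a1" unfolding a1_def a2_def
    using Nm[of e "Suc i"] by simp
  moreover have "Nmult (e+2) (Suc i) \<ge> a1" unfolding a1_def using Nm[of e i] by simp
  ultimately show ?thesis by linarith
qed

lemma Npos: "d \<ge> 2 \<Longrightarrow> k \<ge> 1 \<Longrightarrow> Nmult d k \<ge> 1"
proof -
  assume "d \<ge> 2" "k \<ge> 1"
  then obtain e k' where "d = e + 2" "k = Suc k'" by (metis add.commute le_Suc_ex Suc_le_D One_nat_def)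
  thus ?thesis using Nm[of e k'] by (simp add: Suc_leI)
qed

lemma Lidx_bound:
  assumes "d \<ge> 2"
  shows "1 \<le> kidx d (2^d) \<and> 2^d \<le> 11 * Lidx d (2^d) \<and> Lidx d (2^d) < 2^d"
proof -
  obtain e where d: "d = e + 2" using assms by (metis add.commute le_Suc_ex)
  define m :: nat where "m = 2^d"
  define P where "P k \<longleftrightarrow> (\<Sum>j=1..k. Nmult d j) < m" for k
  have Sge: "(\<Sum>j=1..k. Nmult d j) \<ge> k" for k
  proof -
    have "(\<Sum>j=1..k. Nmult d j) \<ge> (\<Sum>j=1..k. 1)" using Npos assms by (intro sum_mono) auto
    thus ?thesis by simp
  qed
  have bd: "P k \<Longrightarrow> k \<le> m" for k using Sge[of k] unfolding P_def by linarith
  have N1: "Nmult d 1 = d" using Nm[of e 0] d by simp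
  have "d < 2^d" by (rule less_exp)
  hence P1: "P 1" using N1 unfolding P_def m_def by simp
  define K where "K = kidx d m"
  have KG: "K = Greatest P" unfolding K_def kidx_def P_def by simp
  have PK: "P K" using GreatestI_nat[of P 1 m] P1 bd KG by blast
  have K1: "1 \<le> K" using Greatest_le_nat[of P 1 m] P1 bd KG by blast
  have nPK: "\<not> P (Suc K)" using Greatest_le_nat[of P "Suc K" m] bd KG by fastforce
  have L: "Lidx d m = (\<Sum>j=1..K. Nmult d j)" unfolding Lidx_def K_def by simp
  have SS: "(\<Sum>j=1..Suc K. Nmult d j) = (\<Sum>j=1..K. Nmult d j) + Nmult d (Suc K)" by simp
  have "\<not> 8 * Suc K \<le> e + 1"
    using S_upper[of "Suc K" e] nPK unfolding P_def m_def d by auto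
  hence h8: "e + 2 \<le> 8 * Suc K" by simp
  obtain i where Ki: "K = Suc i" using K1 by (metis Suc_le_D One_nat_def)
  have "Nmult d (Suc K) \<le> 10 * Nmult d K"
    using ratio[of e i] h8 Ki d by simp
  moreover have "Nmult d K \<le> (\<Sum>j=1..K. Nmult d j)"
    using K1 by (intro member_le_sum) auto
  ultimately have "m \<le> 11 * Lidx d m" using nPK SS L unfolding P_def by linarith
  moreover have "Lidx d m < m" using PK L unfolding P_def by simp
  ultimately show ?thesis using K1 unfolding K_def m_def by simp
qed

lemma core:
  fixes l :: "nat \<Rightarrow> real" and beta :: "nat \<Rightarrow> nat \<Rightarrow> real"
  assumes b: "b > 0" and d: "d \<ge> 2" and s2: "\<sigma>2 > 0"
  and pos: "\<forall>k\<ge>1. l k > 0"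
  and sN: "summable (\<lambda>k. real (Nmult d (Suc k)) * l (Suc k))"
  and sN1: "(\<Sum>k. real (Nmult d (Suc k)) * l (Suc k)) \<le> 1"
  and sb: "summable (\<lambda>k. \<Sum>j<Nmult d (Suc k). (beta (Suc k) j)\<^sup>2)"
  and mx: "(MAX i\<in>{1..kidx d (2^d)}. 1 / l i) < (real (2^d) - real (Lidx d (2^d))) / b"
  and kp: "\<kappa> > 0" and ks: "sumL d l \<kappa> = real (2^d)"
  shows "pred_risk d (real (2^d)) l beta \<sigma>2 \<kappa> > (1 + (b/(1+b))^2/11) * \<sigma>2"
proof -
  define m :: real where "m = real (2^d)"
  have m0: "m > 0" unfolding m_def by simp
  define N where "N k = real (Nmult d (Suc k))" for k
  define Lc where "Lc k = Lcoef l \<kappa> (Suc k)" for k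
  define p where "p = b / (1+b)"
  define c where "c = p^2/11"
  have N0: "N k \<ge> 1" for k unfolding N_def using Npos[OF d, of "Suc k"] by simp
  have lp: "l (Suc k) > 0" for k using pos by simp
  have Lc0: "Lc k > 0" for k unfolding Lc_def Lcoef_def using lp[of k] kp by simp
  have Lc1: "Lc k < 1" for k unfolding Lc_def Lcoef_def using lp[of k] kp by simp
  have Lcle: "Lc k \<le> l (Suc k) / \<kappa>" for k
    unfolding Lc_def Lcoef_def using lp[of k] kp by (simp add: frac_le)
  have sg: "summable (\<lambda>k. N k * l (Suc k) / \<kappa>)"
    using summable_divide[OF sN, of \<kappa>] unfolding N_def by simp
  have f1le: "N k * Lc k \<le> N k * l (Suc k) / \<kappa>" for k
    using mult_left_mono[OF Lcle[of k], of "N k"] N0[of k] by simp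
  have f1n: "0 \<le> N k * Lc k" for k using N0[of k] Lc0[of k] by simp
  have s1: "summable (\<lambda>k. N k * Lc k)"
    by (rule summable_comparison_test'[OF sg, of 0]) (use f1le f1n in auto)
  have f2le: "N k * (Lc k)^2 \<le> N k * Lc k" for k
  proof -
    have "(Lc k)^2 \<le> Lc k" using Lc0[of k] Lc1[of k] by (simp add: power2_eq_square mult_le_cancel_right1 less_imp_le)
    thus ?thesis using N0[of k] by (intro mult_left_mono) auto
  qed
  have s2s: "summable (\<lambda>k. N k * (Lc k)^2)"
  proof (rule summable_comparison_test'[OF s1, of 0])
    fix n :: nat
    have "0 \<le> N n * (Lc n)^2" using N0[of n] by simp
    thus "norm (N n * (Lc n)^2) \<le> N n * Lc n" using f2le[of n] by simp
  qed
  have sumL_eq: "sumL d l \<kappa> = (\<Sum>k. N k * Lc k)" unfolding sumL_def N_def Lc_def by simp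
  have sumL2_eq: "sumL2 d l \<kappa> = (\<Sum>k. N k * (Lc k)^2)" unfolding sumL2_def N_def Lc_def by simp
  have "m \<le> (\<Sum>k. N k * l (Suc k) / \<kappa>)"
    using suminf_le[OF f1le s1 sg] ks sumL_eq m_def by simp
  also have "\<dots> = (\<Sum>k. N k * l (Suc k)) / \<kappa>" using suminf_divide[OF sN, of \<kappa>] unfolding N_def by simp
  also have "\<dots> \<le> 1 / \<kappa>" using sN1 kp unfolding N_def by (simp add: divide_right_mono)
  finally have mk: "m \<le> 1/\<kappa>" .
  define K where "K = kidx d (2^d)"
  have LB: "1 \<le> K" "2^d \<le> 11 * Lidx d (2^d)" "Lidx d (2^d) < 2^d"
    using Lidx_bound[OF d] unfolding K_def by auto
  define Lm where "Lm = real (Lidx d (2^d))"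
  have Lm1: "m \<le> 11 * Lm" unfolding m_def Lm_def using LB(2)
    by (metis of_nat_le_iff of_nat_mult of_nat_numeral)
  have Lm0: "Lm \<ge> 0" unfolding Lm_def by simp
  have big: "Lc k \<ge> p" if "k < K" for k
  proof -
    have "Suc k \<in> {1..K}" using that by auto
    hence "1 / l (Suc k) \<le> (MAX i\<in>{1..K}. 1 / l i)" by (intro Max_ge) auto
    also have "\<dots> < (m - Lm) / b" using mx unfolding K_def m_def Lm_def .
    also have "\<dots> \<le> m / b" using Lm0 b by (simp add: divide_right_mono)
    also have "\<dots> \<le> 1 / (b * \<kappa>)" using mk b kp by (simp add: divide_simps mult.commute)
    finally have "1 / l (Suc k) < 1 / (b * \<kappa>)" .
    hence "b * \<kappa> < l (Suc k)" using lp[of k] b kp by (simp add: divide_simps)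
    thus ?thesis unfolding Lc_def Lcoef_def p_def using lp[of k] b kp
      by (simp add: divide_simps algebra_simps)
  qed
  have p0: "p > 0" "p < 1" unfolding p_def using b by auto
  have LmS: "Lm = (\<Sum>k<K. N k)" unfolding Lm_def Lidx_def N_def K_def[symmetric]
    by (simp add: sum.atLeast1_atMost_eq del: of_nat_sum) (simp add: of_nat_sum)
  have "p^2 * Lm = (\<Sum>k<K. N k * p^2)" unfolding LmS by (simp add: sum_distrib_right mult.commute)
  also have "\<dots> \<le> (\<Sum>k<K. N k * (Lc k)^2)"
    using big N0 p0 by (intro sum_mono mult_left_mono power_mono) (auto intro: less_imp_le order.trans[OF zero_le_one])
  also have "\<dots> \<le> sumL2 d l \<kappa>" unfolding sumL2_eq
  proof (intro sum_le_suminf[OF s2s])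
    fix n :: nat
    show "0 \<le> N n * (Lc n)^2" using N0[of n] by simp
  qed auto
  finally have lo0: "p^2 * Lm \<le> sumL2 d l \<kappa>" .
  have "m/11 \<le> Lm" using Lm1 by simp
  hence "p^2*(m/11) \<le> p^2*Lm" by (rule mult_left_mono) simp
  moreover have "c*m = p^2*(m/11)" by (simp add: c_def)
  ultimately have lo: "c * m \<le> sumL2 d l \<kappa>" using lo0 by linarith
  have "0 < (\<Sum>k. N k * Lc k - N k * (Lc k)^2)"
  proof (rule suminf_pos2[where i=0])
    show "summable (\<lambda>k. N k * Lc k - N k * (Lc k)^2)" using s1 s2s by (rule summable_diff)
    show "0 \<le> N k * Lc k - N k * (Lc k)^2" for k using f2le[of k] by simp
    have "(Lc 0)^2 < Lc 0" using Lc0[of 0] Lc1[of 0] by (simp add: power2_eq_square)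
    thus "0 < N 0 * Lc 0 - N 0 * (Lc 0)^2" using N0[of 0] by simp
  qed
  hence up: "sumL2 d l \<kappa> < m" using suminf_diff[OF s1 s2s] ks sumL_eq sumL2_eq m_def by simp
  have pp: "p^2 < 1" using p0 by (simp add: power_less_one_iff)
  have c0: "c > 0" "c < 1" unfolding c_def using p0 pp by auto
  have E: "E0 d m l \<kappa> \<ge> 1 / (1 - c)"
  proof -
    have "m - sumL2 d l \<kappa> \<le> m - c*m" using lo by simp
    moreover have "0 < m - sumL2 d l \<kappa>" using up by simp
    moreover have "0 < m - c*m" using lo up by simp
    ultimately have "m / (m - c*m) \<le> m / (m - sumL2 d l \<kappa>)" using m0
      by (intro divide_left_mono) (auto intro!: mult_pos_pos)
    moreover have "m / (m - c*m) = 1/(1-c)" using m0 c0 by (simp add: divide_simps algebra_simps)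
    ultimately show ?thesis unfolding E0_def by simp
  qed
  define B where "B k = (\<Sum>j<Nmult d (Suc k). (beta (Suc k) j)\<^sup>2)" for k
  have B0: "B k \<ge> 0" for k unfolding B_def by (intro sum_nonneg) auto
  have tle: "(1 - Lc k)^2 * B k \<le> B k" for k
  proof -
    have "(1 - Lc k)^2 \<le> 1" using Lc0[of k] Lc1[of k] by (simp add: power_le_one abs_square_le_1)
    thus ?thesis using B0[of k] by (simp add: mult_left_le_one_le)
  qed
  have sT: "summable (\<lambda>k. (1 - Lc k)^2 * B k)"
  proof (rule summable_comparison_test'[OF sb[folded B_def], of 0])
    fix n :: nat
    have "0 \<le> (1 - Lc n)^2 * B n" using B0[of n] by simp
    thus "norm ((1 - Lc n)^2 * B n) \<le> B n" using tle[of n] by simp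
  qed
  have T0: "(\<Sum>k. (1 - Lc k)^2 * B k) \<ge> 0" using B0 by (intro suminf_nonneg[OF sT]) auto
  have PR: "pred_risk d m l beta \<sigma>2 \<kappa> = E0 d m l \<kappa> * ((\<Sum>k. (1 - Lc k)^2 * B k) + \<sigma>2)"
    unfolding pred_risk_def Lc_def B_def by simp
  have "1/(1-c) > 0" using c0 by simp
  hence E1: "E0 d m l \<kappa> > 0" using E by linarith
  have "(1 + c) * (1 - c) < 1" using c0 by (simp add: algebra_simps)
  hence "1 + c < 1 / (1 - c)" using c0 by (simp add: divide_simps)
  hence "(1 + c) * \<sigma>2 < (1 / (1 - c)) * \<sigma>2" using s2 by (rule mult_strict_right_mono)
  also have "\<dots> \<le> E0 d m l \<kappa> * \<sigma>2" using E s2 by (intro mult_right_mono) auto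
  also have "\<dots> \<le> E0 d m l \<kappa> * ((\<Sum>k. (1 - Lc k)^2 * B k) + \<sigma>2)" using E1 T0 by simp
  finally show ?thesis using PR unfolding c_def p_def m_def by simp
qed

theorem corollary2:
  fixes b :: real
  assumes "b > 0"
  shows "\<exists>\<eta>>0. \<forall>(lam :: nat \<Rightarrow> nat \<Rightarrow> real) (beta :: nat \<Rightarrow> nat \<Rightarrow> nat \<Rightarrow> real) (\<sigma>2 :: real).
     ( \<sigma>2 > 0
     \<and> (\<forall>d\<ge>2. \<forall>k\<ge>1. lam d k > 0 \<and> lam d (Suc k) < lam d k)
     \<and> (\<forall>d\<ge>2. summable (\<lambda>k. real (Nmult d (Suc k)) * lam d (Suc k))
               \<and> (\<Sum>k. real (Nmult d (Suc k)) * lam d (Suc k)) \<le> 1)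
     \<and> (\<forall>d\<ge>2. summable (\<lambda>k. \<Sum>j<Nmult d (Suc k). (beta d (Suc k) j)\<^sup>2))
     \<and> (\<forall>d\<ge>2. (MAX i\<in>{1..kidx d (2^d)}. 1 / lam d i)
                 < (real (2^d) - real (Lidx d (2^d))) / b) )
     \<longrightarrow> (\<forall>d\<ge>2. \<forall>\<kappa>>0. sumL d (lam d) \<kappa> = real (2^d) \<longrightarrow>
            pred_risk d (real (2^d)) (lam d) (beta d) \<sigma>2 \<kappa> > (1 + \<eta>) * \<sigma>2)"
proof (intro exI[of _ "(b/(1+b))^2/11"] conjI allI impI)
  show "(b/(1+b))^2/11 > 0" using assms by simp
next
  fix lam :: "nat \<Rightarrow> nat \<Rightarrow> real" and beta :: "nat \<Rightarrow> nat \<Rightarrow> nat \<Rightarrow> real" and \<sigma>2 :: real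
    and d :: nat and \<kappa> :: real
  assume H: "\<sigma>2 > 0
     \<and> (\<forall>d\<ge>2. \<forall>k\<ge>1. lam d k > 0 \<and> lam d (Suc k) < lam d k)
     \<and> (\<forall>d\<ge>2. summable (\<lambda>k. real (Nmult d (Suc k)) * lam d (Suc k))
               \<and> (\<Sum>k. real (Nmult d (Suc k)) * lam d (Suc k)) \<le> 1)
     \<and> (\<forall>d\<ge>2. summable (\<lambda>k. \<Sum>j<Nmult d (Suc k). (beta d (Suc k) j)\<^sup>2))
     \<and> (\<forall>d\<ge>2. (MAX i\<in>{1..kidx d (2^d)}. 1 / lam d i)
                 < (real (2^d) - real (Lidx d (2^d))) / b)"
    and d: "d \<ge> 2" and kp: "\<kappa> > 0" and ks: "sumL d (lam d) \<kappa> = real (2^d)"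
  show "pred_risk d (real (2^d)) (lam d) (beta d) \<sigma>2 \<kappa> > (1 + (b/(1+b))^2/11) * \<sigma>2"
    by (rule core[OF assms d]) (use H d kp ks in auto)
qed

end
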